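(* Let $k\ge2$ and let $z_{ij}\in\mathbb{C}$ with $|z_{ij}|=1$ for all $1\le i<j\le k$, $z_{ji}=\overline{z_{ij}}$. Then the positive map $\Phi_{2k}^{(\mathbf z)}$ defined below is indecomposable; equivalently there is a state $\rho$ on $\mathbb{C}^{2k}\otimes\mathbb{C}^{2k}$ with positive partial transpose such that $\operatorname{Tr}(W^{(\mathbf z)}\rho)<0$, where $W^{(\mathbf z)}=\frac{1}{2k}\sum_{i,j=1}^{2k}e_{ij}\otimes\Phi^{(\mathbf z)}_{2k}(e_{ij})$.
   Context: $e_{ij}=|e_i\rangle\langle e_j|$ for the standard basis of $\mathbb{C}^{2k}$. Write $X\in M_{2k}(\mathbb{C})$ as a $k\times k$ block matrix $X=(X_{ij})$ with $X_{ij}\in M_2(\mathbb{C})$, and let $R_2(Y)=\mathbb{I}_2\operatorname{Tr}Y-Y$ on $M_2(\mathbb{C})$. $\Phi_{2k}^{(\mathbf z)}(X)$ is the block matrix with diagonal blocks $\frac{1}{2(k-1)}(\operatorname{Tr}X-\operatorname{Tr}X_{ii})\mathbb{I}_2$ and off-diagonal blocks $-\frac{z_{ij}}{2(k-1)}(X_{ij}-R_2(X_{ji}))$, $i\ne j$. A positive map $\Lambda$ is decomposable if $\Lambda=\Lambda_1+\Lambda_2\circ\mathrm T$ with $\Lambda_1,\Lambda_2$ completely positive and $\mathrm T$ the transposition; otherwise indecomposable. A state $\rho$ is PPT if $(\mathrm{id}\otimes\mathrm T)\rho\ge0$. *)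

theory Defs
  imports Complex_Main "Jordan_Normal_Form.Matrix"
begin

definition psd :: "nat \<Rightarrow> complex mat \<Rightarrow> bool" where
  "psd n A \<longleftrightarrow> A \<in> carrier_mat n n \<and>
     (\<forall>v :: nat \<Rightarrow> complex.
        Im (\<Sum>i<n. \<Sum>j<n. cnj (v i) * A $$ (i,j) * v j) = 0 \<and>
        Re (\<Sum>i<n. \<Sum>j<n. cnj (v i) * A $$ (i,j) * v j) \<ge> 0)"

definition linear_map_on :: "nat \<Rightarrow> (complex mat \<Rightarrow> complex mat) \<Rightarrow> bool" where
  "linear_map_on n L \<longleftrightarrow>
     (\<forall>X \<in> carrier_mat n n. L X \<in> carrier_mat n n) \<and>
     (\<forall>X \<in> carrier_mat n n. \<forall>Y \<in> carrier_mat n n. L (X + Y) = L X + L Y) \<and>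
     (\<forall>X \<in> carrier_mat n n. \<forall>c. L (c \<cdot>\<^sub>m X) = c \<cdot>\<^sub>m L X)"

definition blk :: "nat \<Rightarrow> complex mat \<Rightarrow> nat \<Rightarrow> nat \<Rightarrow> complex mat" where
  "blk n M a b = mat n n (\<lambda>(r,s). M $$ (a*n + r, b*n + s))"

text \<open>(id_m tensor L) applied to an (m n) x (m n) matrix viewed as m x m block matrix.\<close>
definition amplify :: "nat \<Rightarrow> nat \<Rightarrow> (complex mat \<Rightarrow> complex mat) \<Rightarrow> complex mat \<Rightarrow> complex mat" where
  "amplify m n L M = mat (m*n) (m*n)
     (\<lambda>(i,j). L (blk n M (i div n) (j div n)) $$ (i mod n, j mod n))"

definition completely_positive :: "nat \<Rightarrow> (complex mat \<Rightarrow> complex mat) \<Rightarrow> bool" where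
  "completely_positive n L \<longleftrightarrow> linear_map_on n L \<and>
     (\<forall>m M. psd (m*n) M \<longrightarrow> psd (m*n) (amplify m n L M))"

definition decomposable :: "nat \<Rightarrow> (complex mat \<Rightarrow> complex mat) \<Rightarrow> bool" where
  "decomposable n L \<longleftrightarrow> (\<exists>L1 L2. completely_positive n L1 \<and> completely_positive n L2 \<and>
     (\<forall>X \<in> carrier_mat n n. L X = L1 X + L2 (transpose_mat X)))"

definition tr :: "complex mat \<Rightarrow> complex" where
  "tr X = (\<Sum>i<dim_row X. X $$ (i,i))"

definition R2 :: "complex mat \<Rightarrow> complex mat" where
  "R2 Y = tr Y \<cdot>\<^sub>m 1\<^sub>m 2 - Y"

text \<open>The map Phi_{2k}^{(z)}; blocks indexed 0..k-1 (paper: 1..k), block (a,b) = rows 2a,2a+1, cols 2b,2b+1.\<close>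
definition Phi :: "nat \<Rightarrow> (nat \<Rightarrow> nat \<Rightarrow> complex) \<Rightarrow> complex mat \<Rightarrow> complex mat" where
  "Phi k z X = mat (2*k) (2*k) (\<lambda>(p,q).
     (let a = p div 2; b = q div 2; r = p mod 2; s = q mod 2 in
      if a = b then
        (if r = s then (tr X - tr (blk 2 X a a)) / (2 * (of_nat k - 1)) else 0)
      else - z a b / (2 * (of_nat k - 1)) *
             ((blk 2 X a b - R2 (blk 2 X b a)) $$ (r, s))))"

end

theory Submission
  imports Defs
begin


definition E :: "nat \<Rightarrow> nat \<Rightarrow> nat \<Rightarrow> complex mat" where
  "E n a b = mat n n (\<lambda>(r,s). if r = a \<and> s = b then 1 else 0)"

lemma E_index[simp]: "r < n \<Longrightarrow> s < n \<Longrightarrow> E n a b $$ (r,s) = (if r = a \<and> s = b then 1 else 0)"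
  by (simp add: E_def)
lemma E_dims[simp]: "dim_row (E n a b) = n" "dim_col (E n a b) = n"
  by (simp_all add: E_def)
lemma E_carrier[simp]: "E n a b \<in> carrier_mat n n" by (simp add: E_def)

lemma tr_E: "a < n \<Longrightarrow> tr (E n a b) = (if a = b then 1 else 0)"
proof -
  assume a: "a < n"
  have "tr (E n a b) = (\<Sum>i<n. if i = a \<and> i = b then 1 else 0)"
    unfolding tr_def by (simp add: E_def)
  also have "\<dots> = (\<Sum>i<n. if i = a then (if a = b then 1 else 0) else 0)"
    by (rule sum.cong) auto
  also have "\<dots> = (if a = b then 1 else 0)" using a by (simp add: sum.delta)
  finally show ?thesis .
qed

lemma blk_index[simp]: "r < m \<Longrightarrow> s < m \<Longrightarrow> blk m X a b $$ (r,s) = X $$ (a*m+r, b*m+s)"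
  by (simp add: blk_def)
lemma blk_dims[simp]: "dim_row (blk m X a b) = m" "dim_col (blk m X a b) = m"
  by (simp_all add: blk_def)

lemma tr2: "dim_row Y = 2 \<Longrightarrow> tr Y = Y $$ (0,0) + Y $$ (1,1)"
  by (simp add: tr_def eval_nat_numeral)

lemma R2_index: "dim_row Y = 2 \<Longrightarrow> dim_col Y = 2 \<Longrightarrow> r < 2 \<Longrightarrow> s < 2 \<Longrightarrow>
   R2 Y $$ (r,s) = (if r = s then Y $$ (0,0) + Y $$ (1,1) else 0) - Y $$ (r,s)"
  by (simp add: R2_def tr2)

lemma Phi_index: "p < 2*k \<Longrightarrow> q < 2*k \<Longrightarrow> Phi k z X $$ (p,q) =
   (let a = p div 2; b = q div 2; r = p mod 2; s = q mod 2 in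
      if a = b then
        (if r = s then (tr X - tr (blk 2 X a a)) / (2 * (of_nat k - 1)) else 0)
      else - z a b / (2 * (of_nat k - 1)) *
             ((blk 2 X a b - R2 (blk 2 X b a)) $$ (r, s)))"
  by (simp add: Phi_def)



definition Qs :: "(nat \<Rightarrow> nat \<Rightarrow> nat \<Rightarrow> nat \<Rightarrow> complex) \<Rightarrow> (complex \<times> nat \<times> nat) list \<Rightarrow> complex" where
  "Qs C vs = (\<Sum>(c,i,p)\<leftarrow>vs. \<Sum>(d,j,q)\<leftarrow>vs. cnj c * C i p j q * d)"

definition vec_of :: "nat \<Rightarrow> (complex \<times> nat \<times> nat) list \<Rightarrow> nat \<Rightarrow> complex" where
  "vec_of n vs x = (\<Sum>(c,i,p)\<leftarrow>vs. if x = i*n+p then c else 0)"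

lemma vec_right:
  assumes "\<forall>(c,i,p)\<in>set vs. i*n+p < N"
  shows "(\<Sum>y<N. g y * vec_of n vs y) = (\<Sum>(c,i,p)\<leftarrow>vs. g (i*n+p) * c)"
  using assms
proof (induction vs)
  case Nil then show ?case by (simp add: vec_of_def)
next
  case (Cons t vs)
  obtain c i p where t: "t = (c,i,p)" by (cases t) auto
  have lt: "i*n+p < N" using Cons.prems t by auto
  have "(\<Sum>y<N. g y * vec_of n (t#vs) y) = (\<Sum>y<N. (if y = i*n+p then g y * c else 0) + g y * vec_of n vs y)"
    by (rule sum.cong) (auto simp: vec_of_def t distrib_left)
  also have "\<dots> = g (i*n+p) * c + (\<Sum>y<N. g y * vec_of n vs y)"
    using lt by (simp add: sum.distrib)
  finally show ?case using Cons by (simp add: t)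
qed

lemma vec_left:
  assumes "\<forall>(c,i,p)\<in>set vs. i*n+p < N"
  shows "(\<Sum>y<N. cnj (vec_of n vs y) * g y) = (\<Sum>(c,i,p)\<leftarrow>vs. cnj c * g (i*n+p))"
  using assms
proof (induction vs)
  case Nil then show ?case by (simp add: vec_of_def)
next
  case (Cons t vs)
  obtain c i p where t: "t = (c,i,p)" by (cases t) auto
  have lt: "i*n+p < N" using Cons.prems t by auto
  have "(\<Sum>y<N. cnj (vec_of n (t#vs) y) * g y) = (\<Sum>y<N. (if y = i*n+p then cnj c * g y else 0) + cnj (vec_of n vs y) * g y)"
    by (rule sum.cong) (auto simp: vec_of_def t distrib_right)
  also have "\<dots> = cnj c * g (i*n+p) + (\<Sum>y<N. cnj (vec_of n vs y) * g y)"
    using lt by (simp add: sum.distrib)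
  finally show ?case using Cons by (simp add: t)
qed

lemma qf_vec:
  assumes "\<forall>(c,i,p)\<in>set vs. i*n+p < N"
  shows "(\<Sum>x<N. \<Sum>y<N. cnj (vec_of n vs x) * A $$ (x,y) * vec_of n vs y)
       = Qs (\<lambda>i p j q. A $$ (i*n+p, j*n+q)) vs"
proof -
  have "(\<Sum>x<N. \<Sum>y<N. cnj (vec_of n vs x) * A $$ (x,y) * vec_of n vs y)
      = (\<Sum>x<N. cnj (vec_of n vs x) * (\<Sum>y<N. A $$ (x,y) * vec_of n vs y))"
    by (simp add: sum_distrib_left mult.assoc)
  also have "\<dots> = (\<Sum>x<N. cnj (vec_of n vs x) * (\<Sum>(d,j,q)\<leftarrow>vs. A $$ (x,j*n+q) * d))"
    using vec_right[OF assms] by simp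
  also have "\<dots> = (\<Sum>(c,i,p)\<leftarrow>vs. cnj c * (\<Sum>(d,j,q)\<leftarrow>vs. A $$ (i*n+p,j*n+q) * d))"
    by (rule vec_left[OF assms])
  also have "\<dots> = Qs (\<lambda>i p j q. A $$ (i*n+p, j*n+q)) vs"
    unfolding Qs_def
    by (rule arg_cong[where f=sum_list], rule map_cong, simp)
       (auto simp: sum_list_const_mult[symmetric] mult.assoc split: prod.splits intro!: arg_cong[where f=sum_list])
  finally show ?thesis .
qed

definition Mx :: "nat \<Rightarrow> complex mat" where
  "Mx n = mat (n*n) (n*n) (\<lambda>(x,y). if x mod n = x div n \<and> y mod n = y div n then 1 else 0)"

lemma Mx_psd: "psd (n*n) (Mx n)"
proof -
  { fix v :: "nat \<Rightarrow> complex"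
    define S where "S = (\<Sum>y<n*n. if y mod n = y div n then v y else 0)"
    have "(\<Sum>x<n*n. \<Sum>y<n*n. cnj (v x) * Mx n $$ (x,y) * v y)
        = (\<Sum>x<n*n. \<Sum>y<n*n. (if x mod n = x div n then cnj (v x) else 0) * (if y mod n = y div n then v y else 0))"
      by (intro sum.cong refl) (auto simp: Mx_def)
    also have "\<dots> = (\<Sum>x<n*n. if x mod n = x div n then cnj (v x) else 0) * S"
      by (simp add: S_def sum_product)
    also have "(\<Sum>x<n*n. if x mod n = x div n then cnj (v x) else 0) = cnj S"
      unfolding S_def cnj_sum by (rule sum.cong) auto
    hence "(\<Sum>x<n*n. if x mod n = x div n then cnj (v x) else 0) * S = cnj S * S" by simp
    also have "\<dots> = of_real ((cmod S)^2)"
      by (metis complex_norm_square mult.commute)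
    finally have "(\<Sum>x<n*n. \<Sum>y<n*n. cnj (v x) * Mx n $$ (x,y) * v y) = of_real ((cmod S)^2)" .
    hence "Im (\<Sum>x<n*n. \<Sum>y<n*n. cnj (v x) * Mx n $$ (x,y) * v y) = 0 \<and>
           Re (\<Sum>x<n*n. \<Sum>y<n*n. cnj (v x) * Mx n $$ (x,y) * v y) \<ge> 0" by simp }
  thus ?thesis unfolding psd_def by (simp add: Mx_def)
qed

lemma idx_lt: "(i::nat) < n \<Longrightarrow> p < n \<Longrightarrow> i*n+p < n*n"
proof -
  assume a: "i < n" "p < n"
  have "i*n+p < i*n + n" using a by linarith
  also have "\<dots> = Suc i * n" by simp
  also have "\<dots> \<le> n*n" using a by (intro mult_le_mono1) simp
  finally show ?thesis .
qed

lemma blk_Mx: "i < n \<Longrightarrow> j < n \<Longrightarrow> blk n (Mx n) i j = E n i j"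
  by (rule eq_matI) (auto simp: blk_def E_def Mx_def idx_lt)

lemma amp_Mx: "i < n \<Longrightarrow> j < n \<Longrightarrow> p < n \<Longrightarrow> q < n \<Longrightarrow>
   amplify n n L (Mx n) $$ (i*n+p, j*n+q) = L (E n i j) $$ (p,q)"
  by (simp add: amplify_def idx_lt blk_Mx)

lemma Qs_cong: "(\<And>c i p d j q. (c,i,p) \<in> set vs \<Longrightarrow> (d,j,q) \<in> set vs \<Longrightarrow> C i p j q = C' i p j q)
   \<Longrightarrow> Qs C vs = Qs C' vs"
  unfolding Qs_def
  by (auto split: prod.splits intro!: arg_cong[where f=sum_list] map_cong)

lemma Qs_add: "Qs (\<lambda>i p j q. C i p j q + C' i p j q) vs = Qs C vs + Qs C' vs"
  unfolding Qs_def
  by (simp add: distrib_left distrib_right sum_list_addf split_def)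

lemma cp_Qs:
  assumes "completely_positive n L" "\<forall>(c,i,p)\<in>set vs. i < n \<and> p < n"
  shows "0 \<le> Re (Qs (\<lambda>i p j q. L (E n i j) $$ (p,q)) vs)"
proof -
  have ps: "psd (n*n) (amplify n n L (Mx n))" using assms(1) Mx_psd unfolding completely_positive_def by blast
  have lt: "\<forall>(c,i,p)\<in>set vs. i*n+p < n*n" using assms(2) by (auto intro!: idx_lt)
  have "0 \<le> Re (\<Sum>x<n*n. \<Sum>y<n*n. cnj (vec_of n vs x) * amplify n n L (Mx n) $$ (x,y) * vec_of n vs y)"
    using ps unfolding psd_def by blast
  also have "(\<Sum>x<n*n. \<Sum>y<n*n. cnj (vec_of n vs x) * amplify n n L (Mx n) $$ (x,y) * vec_of n vs y)
     = Qs (\<lambda>i p j q. amplify n n L (Mx n) $$ (i*n+p, j*n+q)) vs"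
    by (rule qf_vec[OF lt])
  also have "\<dots> = Qs (\<lambda>i p j q. L (E n i j) $$ (p,q)) vs"
    by (intro Qs_cong amp_Mx; use assms(2) in fastforce)
  finally show ?thesis .
qed

lemma Re_sum_list_nonneg: "(\<And>x. x \<in> set xs \<Longrightarrow> 0 \<le> Re (f x)) \<Longrightarrow> 0 \<le> Re (sum_list (map f xs))"
  by (induction xs) auto



definition Vl :: "complex \<Rightarrow> (complex \<times> nat \<times> nat) list list" where
  "Vl w = [[(1,0,0),(1,1,1),(cnj w,2,2),(cnj w,3,3)],
           [(1,0,2),(w,3,1)], [(1,1,3),(w,2,0)], [(1,0,3),(-w,2,1)], [(1,1,2),(-w,3,0)],
           [(1,0,1)],[(1,0,1)],[(1,0,1)], [(1,1,0)],[(1,1,0)],[(1,1,0)],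
           [(cnj w,2,3)],[(cnj w,2,3)],[(cnj w,2,3)], [(cnj w,3,2)],[(cnj w,3,2)],[(cnj w,3,2)]]"

definition Wl :: "complex \<Rightarrow> (complex \<times> nat \<times> nat) list list" where
  "Wl w = [[(1,0,0)],[(1,1,1)],[(cnj w,2,2)],[(cnj w,3,3)],
           [(1,0,2),(w,2,0)], [(1,0,3),(w,3,0)], [(1,1,2),(w,2,1)], [(1,1,3),(w,3,1)],
           [(1,0,1),(1,1,0),(cnj w,2,3),(cnj w,3,2)],
           [(1,0,1),(-1,1,0),(-cnj w,2,3),(cnj w,3,2)],
           [(1,0,1),(1,1,0),(-cnj w,2,3),(-cnj w,3,2)]]"

lemma PT:
  "(\<Sum>vs\<leftarrow>Vl w. Qs (\<lambda>i p j q. C j p i q) vs) = (\<Sum>vs\<leftarrow>Wl w. Qs C vs)"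
  unfolding Vl_def Wl_def Qs_def
  by (simp add: algebra_simps)



lemma R2_dims[simp]: "dim_row (R2 Y) = dim_row Y" "dim_col (R2 Y) = dim_col Y"
  by (simp_all add: R2_def)

lemma Phi_index': "n = 2*k \<Longrightarrow> p < n \<Longrightarrow> q < n \<Longrightarrow> Phi k z X $$ (p,q) =
   (let a = p div 2; b = q div 2; r = p mod 2; s = q mod 2 in
      if a = b then
        (if r = s then (tr X - tr (blk 2 X a a)) / (2 * (of_nat k - 1)) else 0)
      else - z a b / (2 * (of_nat k - 1)) *
             ((blk 2 X a b - R2 (blk 2 X b a)) $$ (r, s)))"
  by (simp add: Phi_def)

lemma Val:
  assumes n: "n = 2*k" and k: "k \<ge> 2" and z10: "z 1 0 = cnj (z 0 1)"
    and nz: "z 0 1 * cnj (z 0 1) = 1"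
  shows "(\<Sum>vs\<leftarrow>Vl (z 0 1). Qs (\<lambda>i p j q. Phi k z (E n i j) $$ (p,q)) vs)
     = -8 / (2 * of_nat k - 2)"
proof -
  have lt: "0 < n" "1 < n" "2 < n" "3 < n" "Suc 0 < n" using k n by auto
  have z10': "z (Suc 0) 0 = cnj (z 0 (Suc 0))" using z10 by simp
  have nz': "z 0 (Suc 0) * cnj (z 0 (Suc 0)) = 1" using nz by simp
  show ?thesis
    unfolding Vl_def Qs_def
    apply (simp add: lt Phi_index'[OF n] Let_def tr_E tr2 R2_index z10')
    apply (simp add: nz')
    done
qed

lemma neg_val: "k \<ge> 2 \<Longrightarrow> Re (-8 / (2 * complex_of_nat k - 2)) < 0"
proof -
  assume k: "k \<ge> 2"
  have "(-8 / (2 * complex_of_nat k - 2)) = complex_of_real (-8 / (2*real k - 2))" by simp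
  moreover have "-8 / (2*real k - 2) < 0" using k by (simp add: divide_neg_pos)
  ultimately show ?thesis by simp
qed


lemma transpose_E: "transpose_mat (E n i j) = E n j i"
  by (rule eq_matI) (auto simp: E_def)

theorem mainTheorem9:
  fixes k :: nat and z :: "nat \<Rightarrow> nat \<Rightarrow> complex"
  assumes "k \<ge> 2"
    and "\<And>i j. i < j \<Longrightarrow> j < k \<Longrightarrow> cmod (z i j) = 1"
    and "\<And>i j. i < j \<Longrightarrow> j < k \<Longrightarrow> z j i = cnj (z i j)"
  shows "\<not> decomposable (2*k) (Phi k z)"
proof
  assume "decomposable (2*k) (Phi k z)"
  then obtain L1 L2 where cp1: "completely_positive (2*k) L1" and cp2: "completely_positive (2*k) L2"
    and eq: "\<And>X. X \<in> carrier_mat (2*k) (2*k) \<Longrightarrow> Phi k z X = L1 X + L2 (transpose_mat X)"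
    unfolding decomposable_def by blast
  define n where "n = 2*k"
  define w where "w = z 0 1"
  have k1: "0 < (1::nat)" "1 < k" using assms(1) by auto
  have nz: "z 0 1 * cnj (z 0 1) = 1"
    using assms(2)[OF k1] by (metis complex_norm_square of_real_1 power_one)
  have z10: "z 1 0 = cnj (z 0 1)" using assms(3)[OF k1] .
  have car2: "L2 X \<in> carrier_mat n n" if "X \<in> carrier_mat n n" for X
    using cp2 that unfolding completely_positive_def linear_map_on_def n_def by blast
  have entry: "Phi k z (E n i j) $$ (p,q) = L1 (E n i j) $$ (p,q) + L2 (E n j i) $$ (p,q)"
    if "p < n" "q < n" for i j p q
  proof -
    have "Phi k z (E n i j) = L1 (E n i j) + L2 (E n j i)"
      using eq[of "E n i j"] by (simp add: n_def transpose_E)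
    moreover have "L2 (E n j i) \<in> carrier_mat n n" by (rule car2) simp
    ultimately show ?thesis using that by simp
  qed
  have n4: "4 \<le> n" using assms(1) n_def by simp
  have bndV: "\<forall>(c,i,p)\<in>set vs. i < n \<and> p < n" if "vs \<in> set (Vl w)" for vs
    using that n4 unfolding Vl_def by auto
  have bndW: "\<forall>(c,i,p)\<in>set vs. i < n \<and> p < n" if "vs \<in> set (Wl w)" for vs
    using that n4 unfolding Wl_def by auto
  have split: "Qs (\<lambda>i p j q. Phi k z (E n i j) $$ (p,q)) vs =
       Qs (\<lambda>i p j q. L1 (E n i j) $$ (p,q)) vs + Qs (\<lambda>i p j q. L2 (E n j i) $$ (p,q)) vs"
    if "vs \<in> set (Vl w)" for vs
  proof -
    have "Qs (\<lambda>i p j q. Phi k z (E n i j) $$ (p,q)) vs =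
       Qs (\<lambda>i p j q. L1 (E n i j) $$ (p,q) + L2 (E n j i) $$ (p,q)) vs"
      by (rule Qs_cong, rule entry) (use bndV[OF that] in fastforce)+
    thus ?thesis by (simp add: Qs_add)
  qed
  define S where "S = (\<Sum>vs\<leftarrow>Vl w. Qs (\<lambda>i p j q. Phi k z (E n i j) $$ (p,q)) vs)"
  have "S = (\<Sum>vs\<leftarrow>Vl w. Qs (\<lambda>i p j q. L1 (E n i j) $$ (p,q)) vs + Qs (\<lambda>i p j q. L2 (E n j i) $$ (p,q)) vs)"
    unfolding S_def by (rule arg_cong[where f=sum_list], rule map_cong, simp, rule split)
  also have "\<dots> = (\<Sum>vs\<leftarrow>Vl w. Qs (\<lambda>i p j q. L1 (E n i j) $$ (p,q)) vs) +
                  (\<Sum>vs\<leftarrow>Wl w. Qs (\<lambda>i p j q. L2 (E n i j) $$ (p,q)) vs)"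
    by (simp add: sum_list_addf PT)
  finally have Seq: "S = (\<Sum>vs\<leftarrow>Vl w. Qs (\<lambda>i p j q. L1 (E n i j) $$ (p,q)) vs) +
                  (\<Sum>vs\<leftarrow>Wl w. Qs (\<lambda>i p j q. L2 (E n i j) $$ (p,q)) vs)" .
  have "0 \<le> Re (\<Sum>vs\<leftarrow>Vl w. Qs (\<lambda>i p j q. L1 (E n i j) $$ (p,q)) vs)"
    by (rule Re_sum_list_nonneg, rule cp_Qs) (use cp1 bndV n_def in auto)
  moreover have "0 \<le> Re (\<Sum>vs\<leftarrow>Wl w. Qs (\<lambda>i p j q. L2 (E n i j) $$ (p,q)) vs)"
    by (rule Re_sum_list_nonneg, rule cp_Qs) (use cp2 bndW n_def in auto)
  ultimately have "0 \<le> Re S" using Seq by simp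
  moreover have "S = -8 / (2 * of_nat k - 2)"
    unfolding S_def w_def by (rule Val[OF n_def assms(1) z10 nz])
  ultimately show False using neg_val[OF assms(1)] by simp
qed

end
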